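(* Let $n$ be a positive integer, $\lambda$ an infinite cardinal, and $\tau$ a shift-continuous feebly compact $T_1$-topology on the semilattice $\exp_n\lambda$. Then for every open neighbourhood $U(0)$ of the zero $0=\varnothing$ in $(\exp_n\lambda,\tau)$ there exist finitely many $x_1,\ldots,x_m\in\lambda$ such that $$\exp_n\lambda\setminus\operatorname{cl}_{\exp_n\lambda}(U(0))\subseteq{\uparrow}\{x_1\}\cup\cdots\cup{\uparrow}\{x_m\}.$$
   Context: For a positive integer $n$ and a cardinal $\lambda$, $\exp_n\lambda=\{A\subseteq\lambda\colon |A|\leqslant n\}$, regarded as a semilattice under $\cap$; its natural order is inclusion and its zero is $\varnothing$. For $e$ in a semilattice, ${\uparrow}e=\{f\colon e\leqslant f\}$; so ${\uparrow}\{x\}=\{A\in\exp_n\lambda\colon x\in A\}$. A topology on a semilattice is shift-continuous if the semilattice operation is separately continuous. A topological space is feebly compact if every locally finite open cover of it is finite. *)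

theory Defs
  imports "HOL-Analysis.Analysis"
begin

text \<open>exp_n(lambda): subsets of the ground type of size at most n. The cardinal lambda
 is represented by the (infinite) ground type 'a.\<close>
definition exp_set :: "nat \<Rightarrow> 'a set set" where
  "exp_set n = {A. finite A \<and> card A \<le> n}"

definition upset :: "nat \<Rightarrow> 'a set \<Rightarrow> 'a set set" where
  "upset n e = {f \<in> exp_set n. e \<subseteq> f}"

text \<open>Shift-continuity: the semilattice operation (intersection) is separately continuous
 (it is commutative, so continuity of translations in one argument suffices).\<close>
definition shift_continuous :: "nat \<Rightarrow> 'a set topology \<Rightarrow> bool" where
  "shift_continuous n X \<longleftrightarrow>
     (\<forall>B \<in> exp_set n. continuous_map X X (\<lambda>A. A \<inter> B))"

definition feebly_compact :: "'b topology \<Rightarrow> bool" where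
  "feebly_compact X \<longleftrightarrow>
     (\<forall>\<U>. (\<forall>U \<in> \<U>. openin X U) \<and> \<Union>\<U> = topspace X \<and> locally_finite_in X \<U>
          \<longrightarrow> finite \<U>)"

end

theory Submission
  imports Defs
begin

lemma up_open:
  assumes ts: "topspace X = exp_set n" and sc: "shift_continuous n X" and t1: "t1_space X"
    and B: "B \<in> exp_set n"
  shows "openin X (upset n B)"
proof -
  have cm: "continuous_map X X (\<lambda>A. A \<inter> B)" using sc B by (simp add: shift_continuous_def)
  have fB: "finite B" "card B \<le> n" using B by (auto simp: exp_set_def)
  let ?P = "{D. D \<subset> B}"
  have fin: "finite ?P"
  proof (rule finite_subset)
    show "?P \<subseteq> Pow B" by auto
    show "finite (Pow B)" using fB(1) by simp
  qed
  have sub: "?P \<subseteq> topspace X"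
  proof
    fix D assume "D \<in> ?P"
    hence "D \<subseteq> B" by auto
    hence "finite D" "card D \<le> card B" using fB by (simp_all add: finite_subset card_mono)
    thus "D \<in> topspace X" using fB ts by (auto simp: exp_set_def)
  qed
  have "closedin X ?P" using t1[unfolded t1_space_closedin_finite] fin sub by simp
  hence "openin X (topspace X - ?P)" by (rule openin_diff[OF openin_topspace])
  from openin_continuous_map_preimage[OF cm this]
  have "openin X {A \<in> topspace X. A \<inter> B \<in> topspace X - ?P}" .
  moreover have "{A \<in> topspace X. A \<inter> B \<in> topspace X - ?P} = upset n B"
  proof -
    have "A \<inter> B \<in> topspace X" if "A \<in> topspace X" for A
    proof -
      have "finite A" "card A \<le> n" using that ts by (auto simp: exp_set_def)
      thus ?thesis using ts card_mono[of A "A \<inter> B"] by (auto simp: exp_set_def)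
    qed
    thus ?thesis using ts by (auto simp: upset_def)
  qed
  ultimately show ?thesis by simp
qed

lemma up_closed:
  assumes ts: "topspace X = exp_set n" and sc: "shift_continuous n X" and t1: "t1_space X"
    and n: "n \<ge> 1"
  shows "closedin X (upset n {x})"
proof -
  have xS: "{x} \<in> exp_set n" using n by (auto simp: exp_set_def)
  have cm: "continuous_map X X (\<lambda>A. A \<inter> {x})" using sc xS by (simp add: shift_continuous_def)
  have "closedin X {{x}}" using t1[unfolded t1_space_closedin_singleton] xS ts by simp
  from closedin_continuous_map_preimage[OF cm this]
  have "closedin X {A \<in> topspace X. A \<inter> {x} \<in> {{x}}}" .
  moreover have "{A \<in> topspace X. A \<inter> {x} \<in> {{x}}} = upset n {x}"
    using ts by (auto simp: upset_def)
  ultimately show ?thesis by simp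
qed

theorem proposition8:
  fixes n :: nat and X :: "'a set topology" and U :: "'a set set"
  assumes "n \<ge> 1"
    and "infinite (UNIV :: 'a set)"
    and "topspace X = exp_set n"
    and "shift_continuous n X"
    and "feebly_compact X"
    and "t1_space X"
    and "openin X U" and "{} \<in> U"
  shows "\<exists>F :: 'a set. finite F \<and>
           exp_set n - X closure_of U \<subseteq> (\<Union>x \<in> F. upset n {x})"
proof (rule ccontr)
  assume neg: "\<not> ?thesis"
  note ts = assms(3) and sc = assms(4) and t1 = assms(6)
  define Ob where "Ob F = exp_set n - X closure_of U - (\<Union>x \<in> F. upset n {x})" for F
  have One: "Ob F \<noteq> {}" if "finite F" for F using neg that by (auto simp: Ob_def)
  have Oopen: "openin X (Ob F)" if "finite F" for F
  proof -
    have "closedin X (\<Union>x \<in> F. upset n {x})"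
      using that up_closed[OF ts sc t1 assms(1)] by (intro closedin_Union) auto
    hence "closedin X (X closure_of U \<union> (\<Union>x \<in> F. upset n {x}))" by auto
    hence "openin X (topspace X - (X closure_of U \<union> (\<Union>x \<in> F. upset n {x})))" by (rule openin_diff[OF openin_topspace])
    moreover have "topspace X - (X closure_of U \<union> (\<Union>x \<in> F. upset n {x})) = Ob F"
      using ts by (auto simp: Ob_def)
    ultimately show ?thesis by simp
  qed
  define pick where "pick F = (SOME A. A \<in> Ob F \<and> (\<forall>B\<in>Ob F. card B \<le> card A))" for F
  have pick: "pick F \<in> Ob F \<and> (\<forall>B\<in>Ob F. card B \<le> card (pick F))" if "finite F" for F
  proof -
    have fc: "finite (card ` Ob F)"
      by (rule finite_subset[of _ "{..n}"]) (auto simp: Ob_def exp_set_def)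
    have "card ` Ob F \<noteq> {}" using One[OF that] by auto
    hence "Max (card ` Ob F) \<in> card ` Ob F" using fc by (rule Max_in[rotated])
    then obtain A where A: "A \<in> Ob F" "card A = Max (card ` Ob F)" by auto
    have "\<forall>B\<in>Ob F. card B \<le> card A" using A fc by auto
    hence "\<exists>A. A \<in> Ob F \<and> (\<forall>B\<in>Ob F. card B \<le> card A)" using A by blast
    thus ?thesis unfolding pick_def by (rule someI_ex)
  qed
  define s where "s = (\<lambda>k. rec_nat {} (\<lambda>_ F. F \<union> pick F) k)"
  have s0: "s 0 = {}" and sS: "s (Suc k) = s k \<union> pick (s k)" for k by (simp_all add: s_def)
  have sfin: "finite (s k)" for k
  proof (induction k)
    case 0 thus ?case by (simp add: s0)
  next
    case (Suc k)
    have "pick (s k) \<in> exp_set n" using pick[OF Suc] by (auto simp: Ob_def)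
    hence "finite (pick (s k))" by (auto simp: exp_set_def)
    thus ?case using Suc by (simp add: sS)
  qed
  define A where "A k = pick (s k)" for k
  have AO: "A k \<in> Ob (s k)" and Amax: "\<forall>B\<in>Ob (s k). card B \<le> card (A k)" for k
    using pick[OF sfin] by (auto simp: A_def)
  have smono: "s j \<subseteq> s k" if "j \<le> k" for j k
    using that
  proof (induction k)
    case 0 thus ?case by simp
  next
    case (Suc k) thus ?case by (auto simp: sS le_Suc_eq)
  qed
  have Asub: "A j \<subseteq> s k" if "j < k" for j k
  proof -
    have "A j \<subseteq> s (Suc j)" by (simp add: sS A_def)
    thus ?thesis using smono[of "Suc j" k] that by auto
  qed
  have Adisj0: "A k \<inter> s k = {}" for k
  proof (rule ccontr)
    assume "A k \<inter> s k \<noteq> {}"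
    then obtain x where x: "x \<in> A k" "x \<in> s k" by auto
    have "A k \<in> exp_set n" using AO[of k] by (auto simp: Ob_def)
    hence "A k \<in> upset n {x}" using x by (auto simp: upset_def)
    thus False using AO[of k] x by (auto simp: Ob_def)
  qed
  have Adisj: "A j \<inter> A k = {}" if "j \<noteq> k" for j k
  proof (cases "j < k")
    case True thus ?thesis using Asub[OF True] Adisj0[of k] by auto
  next
    case False hence "k < j" using that by auto
    thus ?thesis using Asub[of k j] Adisj0[of j] by auto
  qed
  have Uts: "U \<subseteq> topspace X" using assms(7) by (rule openin_subset)
  have Ucl: "U \<subseteq> X closure_of U" using Uts by (rule closure_of_subset)
  have AnU: "A k \<notin> U" for k using AO[of k] Ucl by (auto simp: Ob_def)
  have Ane: "A k \<noteq> {}" for k using AnU assms(8) by metis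
  have Ats: "A k \<in> topspace X" for k using AO[of k] ts by (auto simp: Ob_def)
  have injA: "inj A"
  proof (rule injI)
    fix j k assume "A j = A k"
    thus "j = k" using Adisj[of j k] Ane[of j] by auto
  qed
  have Aiso: "openin X {A k}" for k
  proof -
    have eq: "{A k} = Ob (s k) \<inter> upset n (A k)"
    proof
      show "{A k} \<subseteq> Ob (s k) \<inter> upset n (A k)"
        using AO[of k] by (auto simp: upset_def Ob_def)
    next
      show "Ob (s k) \<inter> upset n (A k) \<subseteq> {A k}"
      proof
        fix B assume B: "B \<in> Ob (s k) \<inter> upset n (A k)"
        hence "finite B" "A k \<subseteq> B" "card B \<le> card (A k)" using Amax[of k]
          by (auto simp: upset_def exp_set_def)
        moreover have "card (A k) \<le> card B" using calculation card_mono[of B "A k"] by simp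
        ultimately have "A k = B" using card_subset_eq[of B "A k"] by simp
        thus "B \<in> {A k}" by simp
      qed
    qed
    have "openin X (upset n (A k))" using up_open[OF ts sc t1] Ats ts by simp
    thus ?thesis unfolding eq using Oopen[OF sfin] by auto
  qed
  have locfin: "\<exists>V. openin X V \<and> C \<in> V \<and> finite {k. A k \<in> V}" if C: "C \<in> topspace X" for C
  proof (cases "C = {}")
    case True
    have "{k. A k \<in> U} = {}" using AnU by auto
    thus ?thesis using True assms(7,8) by (intro exI[of _ U]) auto
  next
    case False
    have "finite {k. A k \<in> upset n C}"
    proof (cases "{k. A k \<in> upset n C} = {}")
      case True thus ?thesis by simp
    next
      case False
      then obtain k0 where k0: "C \<subseteq> A k0" by (auto simp: upset_def)
      have "{k. A k \<in> upset n C} \<subseteq> {k0}"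
      proof
        fix k assume "k \<in> {k. A k \<in> upset n C}"
        hence "C \<subseteq> A k" by (auto simp: upset_def)
        thus "k \<in> {k0}" using k0 Adisj[of k k0] \<open>C \<noteq> {}\<close> by auto
      qed
      thus ?thesis by (rule finite_subset) simp
    qed
    moreover have "openin X (upset n C)" using up_open[OF ts sc t1] C ts by simp
    moreover have "C \<in> upset n C" using C ts by (auto simp: upset_def)
    ultimately show ?thesis by blast
  qed
  have rclosed: "closedin X (range A)"
  proof -
    have "openin X (topspace X - range A)"
    proof (subst openin_subopen, intro ballI)
      fix C assume C: "C \<in> topspace X - range A"
      then obtain V where V: "openin X V" "C \<in> V" "finite {k. A k \<in> V}" using locfin by blast
      have "finite (A ` {k. A k \<in> V})" using V(3) by simp
      moreover have "A ` {k. A k \<in> V} \<subseteq> topspace X" using Ats by auto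
      ultimately have "closedin X (A ` {k. A k \<in> V})"
        using t1 unfolding t1_space_closedin_finite by blast
      hence "openin X (V - A ` {k. A k \<in> V})" using V(1) by (simp add: openin_diff)
      moreover have "V - A ` {k. A k \<in> V} \<subseteq> topspace X - range A"
        using openin_subset[OF V(1)] by auto
      moreover have "C \<in> V - A ` {k. A k \<in> V}" using C V by auto
      ultimately show "\<exists>T. openin X T \<and> C \<in> T \<and> T \<subseteq> topspace X - range A" by blast
    qed
    moreover have "range A \<subseteq> topspace X" using Ats by auto
    ultimately show ?thesis by (simp add: closedin_def)
  qed
  define \<U> where "\<U> = insert (topspace X - range A) ((\<lambda>k. {A k}) ` UNIV)"
  have "finite \<U>"
  proof (rule assms(5)[unfolded feebly_compact_def, rule_format], intro conjI)
    show "\<forall>W\<in>\<U>. openin X W" using rclosed Aiso by (auto simp: \<U>_def)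
    show "\<Union>\<U> = topspace X" using Ats by (auto simp: \<U>_def)
    show "locally_finite_in X \<U>" unfolding locally_finite_in_def
    proof (intro conjI ballI)
      show "\<Union>\<U> \<subseteq> topspace X" using Ats by (auto simp: \<U>_def)
    next
      fix C assume "C \<in> topspace X"
      then obtain V where V: "openin X V" "C \<in> V" "finite {k. A k \<in> V}" using locfin by blast
      have "{W \<in> \<U>. W \<inter> V \<noteq> {}} \<subseteq> insert (topspace X - range A) ((\<lambda>k. {A k}) ` {k. A k \<in> V})"
        by (auto simp: \<U>_def)
      moreover have "finite (insert (topspace X - range A) ((\<lambda>k. {A k}) ` {k. A k \<in> V}))"
        using V(3) by simp
      ultimately have "finite {W \<in> \<U>. W \<inter> V \<noteq> {}}" by (rule finite_subset)
      thus "\<exists>V. openin X V \<and> C \<in> V \<and> finite {W \<in> \<U>. W \<inter> V \<noteq> {}}" using V by blast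
    qed
  qed
  hence "finite ((\<lambda>k. {A k}) ` (UNIV :: nat set))" by (simp add: \<U>_def)
  moreover have "inj (\<lambda>k. {A k})" using injA by (auto simp: inj_def)
  ultimately have "finite (UNIV :: nat set)" using finite_imageD by blast
  thus False by simp
qed

end
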